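(* Let $D\in\mathbb{Z}_{\le0}$ and let $d\ge1$ be an integer coprime to $D$. Then for every $s\in\mathbb{Z}^n$ with $D\equiv\frac12qS^{-1}[s]\pmod{qd}$, the vector $$\xi=\left(\frac{\frac12qS^{-1}[s]-D}{qd},\ S^{-1}s,\ d\right)^t\in\mathbb{Q}^{n+2}$$ belongs to $L_0\!\left[-\frac Dq,\frac12\mathbb{Z}\right]$, i.e. $\phi_0[\xi]=-\frac Dq$ and $\{\phi_0(\xi,y):y\in\mathbb{Z}^{n+2}\}=\frac12\mathbb{Z}$.
   Context: $S$ is an even positive definite symmetric integral $n\times n$ matrix ($n\ge1$), $A[B]=B^tAB$, and $q$ is the least positive integer with $\frac12qS^{-1}[r]\in\mathbb{Z}$ for all $r\in\mathbb{Z}^n$. $S_0=\begin{pmatrix}0&0&1\\0&-S&0\\1&0&0\end{pmatrix}$, $\phi_0(x,y)=\frac12x^tS_0y$ on $V_0=\mathbb{Q}^{n+2}$, $\phi_0[x]=\phi_0(x,x)$, $L_0=\mathbb{Z}^{n+2}$. For $c\in\mathbb{Q}^\times$ and a fractional ideal $\mathfrak b$ of $\mathbb{Q}$, $L_0[c,\mathfrak b]=\{x\in V_0:\phi_0[x]=c,\ \phi_0(x,L_0)=\mathfrak b\}$, where $\phi_0(x,L_0)$ is the set (a fractional ideal) $\{\phi_0(x,y):y\in L_0\}$. *)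

theory Defs
  imports "Jordan_Normal_Form.Matrix" "HOL-Number_Theory.Cong"
begin

definition qf :: "'a::comm_ring_1 mat \<Rightarrow> 'a vec \<Rightarrow> 'a" where
  "qf A x = x \<bullet> (A *\<^sub>v x)"

definition Sinv :: "int mat \<Rightarrow> rat mat" where
  "Sinv S = (THE T. T \<in> carrier_mat (dim_row S) (dim_row S) \<and>
                    map_mat rat_of_int S * T = 1\<^sub>m (dim_row S))"

definition even_pos_def :: "nat \<Rightarrow> int mat \<Rightarrow> bool" where
  "even_pos_def n S \<longleftrightarrow> S \<in> carrier_mat n n \<and> transpose_mat S = S \<and>
     (\<forall>i<n. even (S $$ (i,i))) \<and>
     (\<forall>x :: real vec. x \<in> carrier_vec n \<and> x \<noteq> 0\<^sub>v n \<longrightarrow> qf (map_mat real_of_int S) x > 0)"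

definition level :: "int mat \<Rightarrow> nat" where
  "level S = (LEAST q::nat. q > 0 \<and>
     (\<forall>r :: int vec. r \<in> carrier_vec (dim_row S) \<longrightarrow>
        (1/2) * of_nat q * qf (Sinv S) (map_vec rat_of_int r) \<in> \<int>))"

text \<open>S_0 = ((0,0,1),(0,-S,0),(1,0,0)), an (n+2)x(n+2) matrix.\<close>
definition S0 :: "int mat \<Rightarrow> int mat" where
  "S0 S = (let n = dim_row S in
     mat (n+2) (n+2) (\<lambda>(i,j).
       if (i = 0 \<and> j = n+1) \<or> (i = n+1 \<and> j = 0) then 1
       else if 1 \<le> i \<and> i \<le> n \<and> 1 \<le> j \<and> j \<le> n then - S $$ (i-1, j-1)
       else 0))"

definition phi0 :: "int mat \<Rightarrow> rat vec \<Rightarrow> rat vec \<Rightarrow> rat" where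
  "phi0 S x y = (1/2) * (x \<bullet> (map_mat rat_of_int (S0 S) *\<^sub>v y))"

text \<open>L_0[c, b] = {x in Q^{n+2}. phi0[x] = c, phi0(x, L_0) = b}, L_0 = Z^{n+2}.\<close>
definition L0 :: "int mat \<Rightarrow> rat \<Rightarrow> rat set \<Rightarrow> rat vec set" where
  "L0 S c b = {x. x \<in> carrier_vec (dim_row S + 2) \<and> phi0 S x x = c \<and>
      {phi0 S x (map_vec rat_of_int y) | y :: int vec. y \<in> carrier_vec (dim_row S + 2)} = b}"

definition half_Z :: "rat set" where
  "half_Z = {of_int k / 2 | k :: int. True}"

end

theory Submission
  imports Defs "Jordan_Normal_Form.Determinant"
begin

lemma sum_split_ends:
  fixes f :: "nat \<Rightarrow> 'a::comm_monoid_add"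
  shows "(\<Sum>i<n+2. f i) = f 0 + (\<Sum>k<n. f (k+1)) + f (n+1)"
proof -
  have "(\<Sum>i<Suc (Suc n). f i) = f 0 + (\<Sum>i<Suc n. f (Suc i))"
    by (rule sum.lessThan_Suc_shift)
  also have "(\<Sum>i<Suc n. f (Suc i)) = (\<Sum>k<n. f (Suc k)) + f (Suc n)"
    by (rule sum.lessThan_Suc)
  finally show ?thesis by (simp add: add.assoc)
qed

lemma rat_denom: "\<exists>m::int. m > 0 \<and> of_int m * (x::rat) \<in> \<int>"
proof -
  obtain a b where qb: "quotient_of x = (a,b)" by (cases "quotient_of x")
  have b: "b > 0" using quotient_of_denom_pos[OF qb] .
  have "x = of_int a / of_int b" using quotient_of_div[OF qb] .
  hence "of_int b * x = of_int a" using b by simp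
  thus ?thesis using b by (intro exI[of _ b]) auto
qed

lemma detS_nonzero:
  assumes "even_pos_def n S"
  shows "det S \<noteq> 0"
proof
  assume d0: "det S = 0"
  have Sc: "S \<in> carrier_mat n n" using assms unfolding even_pos_def_def by auto
  let ?Sr = "map_mat real_of_int S"
  have Src: "?Sr \<in> carrier_mat n n" using Sc by auto
  have "det ?Sr = real_of_int (det S)" by (rule of_int_hom.hom_det)
  hence "det ?Sr = 0" using d0 by simp
  then obtain v where v: "v \<in> carrier_vec n" "v \<noteq> 0\<^sub>v n" "?Sr *\<^sub>v v = 0\<^sub>v n"
    using det_0_iff_vec_prod_zero_field[OF Src] by auto
  have "qf ?Sr v > 0" using assms v unfolding even_pos_def_def by auto
  moreover have "qf ?Sr v = 0" unfolding qf_def v(3) using v(1) by simp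
  ultimately show False by simp
qed

lemma Sinv_props:
  assumes "even_pos_def n S"
  shows "Sinv S \<in> carrier_mat n n" "map_mat rat_of_int S * Sinv S = 1\<^sub>m n"
     "Sinv S * map_mat rat_of_int S = 1\<^sub>m n"
proof -
  have Sc: "S \<in> carrier_mat n n" using assms unfolding even_pos_def_def by auto
  let ?R = "map_mat rat_of_int S"
  have Rc: "?R \<in> carrier_mat n n" using Sc by auto
  have "det ?R = rat_of_int (det S)" by (rule of_int_hom.hom_det)
  hence dR: "det ?R \<noteq> 0" using detS_nonzero[OF assms] by simp
  from det_non_zero_imp_unit[OF Rc dR, of "()"]
  have "\<exists>B\<in>carrier_mat n n. B * ?R = 1\<^sub>m n \<and> ?R * B = 1\<^sub>m n"
    unfolding Units_def ring_mat_simps by blast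
  then obtain B where B: "B \<in> carrier_mat n n" "?R * B = 1\<^sub>m n" by blast
  have uniq: "T = B" if T: "T \<in> carrier_mat n n" "?R * T = 1\<^sub>m n" for T
  proof -
    have TR: "T * ?R = 1\<^sub>m n" by (rule mat_mult_left_right_inverse[OF Rc T])
    have "T = T * (?R * B)" using B T by simp
    also have "\<dots> = (T * ?R) * B" using B T Rc by (simp add: assoc_mult_mat)
    also have "\<dots> = B" using TR B by simp
    finally show ?thesis .
  qed
  have dr: "dim_row S = n" using Sc by simp
  have "Sinv S = B" unfolding Sinv_def dr
  proof (rule the_equality)
    show "B \<in> carrier_mat n n \<and> ?R * B = 1\<^sub>m n" using B by blast
  next
    fix T assume "T \<in> carrier_mat n n \<and> ?R * T = 1\<^sub>m n"
    thus "T = B" using uniq by blast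
  qed
  thus "Sinv S \<in> carrier_mat n n" "?R * Sinv S = 1\<^sub>m n" "Sinv S * ?R = 1\<^sub>m n"
    using B mat_mult_left_right_inverse[OF Rc B] by auto
qed

lemma qf_expand:
  assumes "T \<in> carrier_mat n n" "v \<in> carrier_vec n"
  shows "qf T v = (\<Sum>i\<in>{0..<n}. \<Sum>j\<in>{0..<n}. v$i * T$$(i,j) * v$j)"
  using assms unfolding qf_def
  by (auto simp: scalar_prod_def sum_distrib_left mult.assoc intro!: sum.cong)

lemma level_props:
  assumes "even_pos_def n S"
  shows "level S > 0"
    "\<And>r. r \<in> carrier_vec n \<Longrightarrow> (1/2) * of_nat (level S) * qf (Sinv S) (map_vec rat_of_int r) \<in> \<int>"
proof -
  have Sc: "S \<in> carrier_mat n n" using assms unfolding even_pos_def_def by auto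
  have dr: "dim_row S = n" using Sc by simp
  define T where "T = Sinv S"
  have Tc: "T \<in> carrier_mat n n" using Sinv_props[OF assms] T_def by simp
  define m where "m = (\<lambda>x::rat. SOME m::int. m > 0 \<and> of_int m * x \<in> \<int>)"
  have m: "m x > 0 \<and> of_int (m x) * x \<in> \<int>" for x
    unfolding m_def by (rule someI_ex[OF rat_denom])
  define N where "N = (\<Prod>p\<in>{..<n}\<times>{..<n}. m (T $$ p))"
  have Npos: "N > 0" unfolding N_def using m by (intro prod_pos) auto
  have NT: "of_int N * T $$ (i,j) \<in> \<int>" if "i < n" "j < n" for i j
  proof -
    have "N = m (T $$ (i,j)) * (\<Prod>p\<in>{..<n}\<times>{..<n} - {(i,j)}. m (T $$ p))"
      unfolding N_def using that by (subst prod.remove[of _ "(i,j)"]) auto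
    hence "of_int N * T $$ (i,j) = (of_int (m (T $$ (i,j))) * T $$ (i,j)) *
       of_int (\<Prod>p\<in>{..<n}\<times>{..<n} - {(i,j)}. m (T $$ p))" by (simp add: algebra_simps)
    also have "\<dots> \<in> \<int>" using m[of "T $$ (i,j)"] by (rule_tac Ints_mult) (auto simp del: of_int_prod)
    finally show ?thesis .
  qed
  define P where "P = (\<lambda>q::nat. q > 0 \<and>
     (\<forall>r :: int vec. r \<in> carrier_vec (dim_row S) \<longrightarrow>
        (1/2) * of_nat q * qf (Sinv S) (map_vec rat_of_int r) \<in> \<int>))"
  have "P (2 * nat N)"
    unfolding P_def
  proof (intro conjI allI impI)
    show "0 < 2 * nat N" using Npos by simp
    fix r :: "int vec" assume r: "r \<in> carrier_vec (dim_row S)"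
    let ?r = "map_vec rat_of_int r"
    have rc: "?r \<in> carrier_vec n" using r dr by simp
    have "(1/2) * of_nat (2 * nat N) * qf (Sinv S) ?r = of_int N * qf T ?r"
      using Npos T_def by simp
    also have "\<dots> = (\<Sum>i\<in>{0..<n}. \<Sum>j\<in>{0..<n}. ?r$i * (of_int N * T$$(i,j)) * ?r$j)"
      unfolding qf_expand[OF Tc rc] by (simp add: sum_distrib_left algebra_simps)
    also have "\<dots> \<in> \<int>"
    proof (rule Ints_sum, rule Ints_sum)
      fix i j assume "i \<in> {0..<n}" "j \<in> {0..<n}"
      hence ij: "i < n" "j < n" by auto
      have a: "?r$i \<in> \<int>" "?r$j \<in> \<int>" using ij r dr by auto
      show "?r$i * (of_int N * T$$(i,j)) * ?r$j \<in> \<int>"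
        by (rule Ints_mult[OF Ints_mult[OF a(1) NT[OF ij]] a(2)])
    qed
    finally show "(1/2) * of_nat (2 * nat N) * qf (Sinv S) ?r \<in> \<int>" .
  qed
  hence PL: "P (level S)" unfolding level_def P_def[symmetric] by (rule LeastI)
  thus "level S > 0" unfolding P_def by simp
  fix r :: "int vec" assume "r \<in> carrier_vec n"
  thus "(1/2) * of_nat (level S) * qf (Sinv S) (map_vec rat_of_int r) \<in> \<int>"
    using PL unfolding P_def dr by blast
qed

definition mid :: "nat \<Rightarrow> 'a vec \<Rightarrow> 'a vec" where
  "mid n x = vec n (\<lambda>k. x $ (k+1))"

lemma S0_mult:
  assumes S: "S \<in> carrier_mat n n" and y: "y \<in> carrier_vec (n+2)"
  shows "(map_mat rat_of_int (S0 S) *\<^sub>v y) $ 0 = y $ (n+1)"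
    "(map_mat rat_of_int (S0 S) *\<^sub>v y) $ (n+1) = y $ 0"
    "k < n \<Longrightarrow> (map_mat rat_of_int (S0 S) *\<^sub>v y) $ (k+1) = - ((map_mat rat_of_int S *\<^sub>v mid n y) $ k)"
proof -
  have dr: "dim_row S = n" "dim_col S = n" using S by auto
  have c: "S0 S \<in> carrier_mat (n+2) (n+2)" unfolding S0_def Let_def dr by simp
  have e: "S0 S $$ (i,j) = (if (i = 0 \<and> j = n+1) \<or> (i = n+1 \<and> j = 0) then 1
       else if 1 \<le> i \<and> i \<le> n \<and> 1 \<le> j \<and> j \<le> n then - S $$ (i-1, j-1)
       else 0)" if "i < n+2" "j < n+2" for i j
    unfolding S0_def Let_def dr using that by simp
  have gen: "(map_mat rat_of_int (S0 S) *\<^sub>v y) $ i = (\<Sum>j<n+2. rat_of_int (S0 S $$ (i,j)) * y $ j)"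
    if "i < n+2" for i
    using that c y by (simp add: scalar_prod_def lessThan_atLeast0)
  show "(map_mat rat_of_int (S0 S) *\<^sub>v y) $ 0 = y $ (n+1)"
    unfolding gen[of 0, simplified] sum_split_ends by (simp add: e)
  show "(map_mat rat_of_int (S0 S) *\<^sub>v y) $ (n+1) = y $ 0"
  proof -
    have "n+1 < n+2" by simp
    from gen[OF this] show ?thesis unfolding sum_split_ends by (simp add: e)
  qed
  assume k: "k < n"
  have "(map_mat rat_of_int (S0 S) *\<^sub>v y) $ (k+1) = (\<Sum>j<n. - rat_of_int (S $$ (k,j)) * y $ (j+1))"
  proof -
    have "k+1 < n+2" using k by simp
    from gen[OF this] show ?thesis unfolding sum_split_ends using k by (simp add: e)
  qed
  also have "\<dots> = - ((map_mat rat_of_int S *\<^sub>v mid n y) $ k)"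
    using k S unfolding mid_def by (simp add: scalar_prod_def lessThan_atLeast0 sum_negf)
  finally show "(map_mat rat_of_int (S0 S) *\<^sub>v y) $ (k+1) = - ((map_mat rat_of_int S *\<^sub>v mid n y) $ k)" .
qed

lemma phi0_split:
  assumes S: "S \<in> carrier_mat n n" and x: "x \<in> carrier_vec (n+2)" and y: "y \<in> carrier_vec (n+2)"
  shows "phi0 S x y = (1/2) * (x$0 * y$(n+1) + x$(n+1) * y$0 - mid n x \<bullet> (map_mat rat_of_int S *\<^sub>v mid n y))"
proof -
  have dr: "dim_row S = n" using S by auto
  have c0: "map_mat rat_of_int (S0 S) \<in> carrier_mat (n+2) (n+2)" unfolding S0_def Let_def dr by simp
  have c: "map_mat rat_of_int (S0 S) *\<^sub>v y \<in> carrier_vec (n+2)" using c0 y by (rule mult_mat_vec_carrier)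
  have "x \<bullet> (map_mat rat_of_int (S0 S) *\<^sub>v y) = (\<Sum>i<n+2. x$i * (map_mat rat_of_int (S0 S) *\<^sub>v y) $ i)"
  proof -
    have dv: "dim_vec (map_mat rat_of_int (S0 S) *\<^sub>v y) = n+2" using c by (simp only: carrier_vec_def mem_Collect_eq)
    show ?thesis unfolding scalar_prod_def dv lessThan_atLeast0 ..
  qed
  also have "\<dots> = x$0 * y$(n+1) + (\<Sum>k<n. x$(k+1) * - ((map_mat rat_of_int S *\<^sub>v mid n y) $ k)) + x$(n+1) * y$0"
    unfolding sum_split_ends using S0_mult[OF S y] by simp
  also have "(\<Sum>k<n. x$(k+1) * - ((map_mat rat_of_int S *\<^sub>v mid n y) $ k)) = - (mid n x \<bullet> (map_mat rat_of_int S *\<^sub>v mid n y))"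
    using S unfolding mid_def by (simp add: scalar_prod_def lessThan_atLeast0 sum_negf)
  finally show ?thesis unfolding phi0_def by simp
qed

lemma bezout_aux:
  fixes d :: int and s :: "nat \<Rightarrow> int"
  assumes d: "d \<ge> 1"
    and H: "\<And>g::int. g > 0 \<Longrightarrow> g dvd d \<Longrightarrow> (\<forall>i<n. g dvd s i) \<Longrightarrow> g = 1"
  shows "\<exists>y0 w. d*y0 - (\<Sum>i<n. s i * w i) = 1"
proof -
  define I where "I = {d*y0 - (\<Sum>i<n. s i * w i) | y0 w. True}"
  define P where "P = (\<lambda>m::nat. m > 0 \<and> int m \<in> I)"
  have "d \<in> I" unfolding I_def by (rule CollectI, rule exI[of _ 1], rule exI[of _ "\<lambda>_. 0"]) simp
  hence "P (nat d)" unfolding P_def using d by simp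
  define g where "g = Least P"
  have Pg: "P g" unfolding g_def by (rule LeastI) fact
  then obtain z0 u where gI: "int g = d*z0 - (\<Sum>i<n. s i * u i)" and gpos: "g > 0"
    unfolding P_def I_def by auto
  have dv: "int g dvd x" if "x \<in> I" for x
  proof (rule ccontr)
    assume nd: "\<not> int g dvd x"
    from that obtain y0 w where x: "x = d*y0 - (\<Sum>i<n. s i * w i)" unfolding I_def by auto
    define t where "t = x div int g"
    have "x mod int g = x - t * int g" unfolding t_def by (simp add: minus_div_mult_eq_mod)
    also have "\<dots> = d*(y0 - t*z0) - (\<Sum>i<n. s i * (w i - t * u i))"
      unfolding x gI by (simp add: algebra_simps sum_subtractf sum_distrib_left)
    finally have "x mod int g \<in> I" unfolding I_def
      by (intro CollectI exI[of _ "y0 - t*z0"] exI[of _ "\<lambda>i. w i - t * u i"]) simp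
    moreover have "x mod int g > 0" using nd gpos
      by (metis dvd_eq_mod_eq_0 le_less of_nat_0_less_iff pos_mod_sign)
    moreover have "x mod int g < int g" using gpos by simp
    ultimately have "P (nat (x mod int g))" "nat (x mod int g) < g" unfolding P_def by auto
    thus False unfolding g_def using not_less_Least by blast
  qed
  have "int g = 1"
  proof (rule H)
    show "int g > 0" using gpos by simp
    show "int g dvd d" by (rule dv) fact
    show "\<forall>i<n. int g dvd s i"
    proof (intro allI impI)
      fix i assume i: "i < n"
      have "d*0 - (\<Sum>j<n. s j * (if j = i then -1 else 0)) \<in> I" unfolding I_def
        by (intro CollectI exI[of _ "0::int"] exI[of _ "\<lambda>j. if j = i then -1 else (0::int)"]) simp
      moreover have "(\<Sum>j<n. s j * (if j = i then -1 else 0)) = - s i"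
        using i by (simp add: if_distrib cong: if_cong)
      ultimately have "s i \<in> I" by simp
      thus "int g dvd s i" by (rule dv)
    qed
  qed
  with Pg show ?thesis unfolding P_def I_def by auto
qed

theorem lemma6p7:
  fixes n :: nat and S :: "int mat" and D :: int and d :: int and s :: "int vec"
  assumes "n \<ge> 1" and "even_pos_def n S"
    and "D \<le> 0" and "d \<ge> 1" and "coprime d D"
    and "s \<in> carrier_vec n"
    and "[D = \<lfloor>(1/2) * of_nat (level S) * qf (Sinv S) (map_vec rat_of_int s)\<rfloor>]
           (mod (int (level S) * d))"
  shows "vec (n+2) (\<lambda>i.
           if i = 0 then ((1/2) * of_nat (level S) * qf (Sinv S) (map_vec rat_of_int s) - of_int D)
                         / (of_nat (level S) * of_int d)
           else if i = n+1 then of_int d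
           else (Sinv S *\<^sub>v map_vec rat_of_int s) $ (i-1))
         \<in> L0 S (- of_int D / of_nat (level S)) half_Z"
proof -
  have Sc: "S \<in> carrier_mat n n" and Ssym: "transpose_mat S = S"
    using assms(2) unfolding even_pos_def_def by auto
  have dr: "dim_row S = n" using Sc by simp
  define R where "R = map_mat rat_of_int S"
  define T where "T = Sinv S"
  have Rc: "R \<in> carrier_mat n n" unfolding R_def using Sc by simp
  have Tc: "T \<in> carrier_mat n n" and RT: "R * T = 1\<^sub>m n"
    using Sinv_props[OF assms(2)] unfolding R_def T_def by auto
  have Rt: "transpose_mat R = R" unfolding R_def map_mat_transpose Ssym ..
  define q where "q = level S"
  have qpos: "q > 0" unfolding q_def by (rule level_props(1)[OF assms(2)])
  define sr where "sr = map_vec rat_of_int s"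
  have src: "sr \<in> carrier_vec n" unfolding sr_def using assms(6) by simp
  define Qf where "Qf = qf T sr"
  have "(1/2) * of_nat q * Qf \<in> \<int>" unfolding q_def Qf_def T_def sr_def
    by (rule level_props(2)[OF assms(2) assms(6)])
  then obtain Qi where Qi: "(1/2) * of_nat q * Qf = of_int Qi" by (elim Ints_cases) auto
  have "[D = Qi] (mod (int q * d))" using assms(7) Qi unfolding q_def Qf_def T_def sr_def by simp
  hence "int q * d dvd D - Qi" by (simp add: cong_iff_dvd_diff)
  then obtain k where k: "D - Qi = int q * d * k" by (elim dvdE)
  define a where "a = - k"
  have a: "Qi - D = int q * d * a" unfolding a_def using k by simp
  define X where "X = vec (n+2) (\<lambda>i.
           if i = 0 then ((1/2) * of_nat q * Qf - of_int D) / (of_nat q * of_int d)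
           else if i = n+1 then of_int d
           else (T *\<^sub>v sr) $ (i-1))"
  have Xc: "X \<in> carrier_vec (n+2)" unfolding X_def by simp
  have X0: "X $ 0 = of_int a"
  proof -
    have "X $ 0 = (of_int Qi - of_int D) / (of_nat q * of_int d)" unfolding X_def Qi by simp
    also have "of_int Qi - of_int D = (rat_of_int (Qi - D))" by simp
    also have "\<dots> = of_nat q * of_int d * of_int a" unfolding a by simp
    finally show ?thesis using qpos assms(4) by simp
  qed
  have Xn: "X $ (n+1) = of_int d" unfolding X_def by simp
  have Xm: "mid n X = T *\<^sub>v sr" unfolding mid_def X_def
    by (rule eq_vecI) (use Tc in auto)
  have Tsr: "T *\<^sub>v sr \<in> carrier_vec n" using Tc src by simp
  have key: "mid n X \<bullet> (R *\<^sub>v w) = sr \<bullet> w" if w: "w \<in> carrier_vec n" for w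
  proof -
    have "mid n X \<bullet> (R *\<^sub>v w) = (transpose_mat R *\<^sub>v (T *\<^sub>v sr)) \<bullet> w"
      unfolding Xm by (rule transpose_vec_mult_scalar[OF Rc w Tsr, symmetric])
    also have "transpose_mat R *\<^sub>v (T *\<^sub>v sr) = (R * T) *\<^sub>v sr"
      unfolding Rt using Rc Tc src by simp
    also have "\<dots> = sr" unfolding RT using src by simp
    finally show ?thesis .
  qed
  have self: "phi0 S X X = - of_int D / of_nat q"
  proof -
    have "mid n X \<bullet> (R *\<^sub>v mid n X) = sr \<bullet> (T *\<^sub>v sr)"
      using key[OF Tsr] unfolding Xm .
    also have "\<dots> = Qf" unfolding Qf_def qf_def ..
    finally have m: "mid n X \<bullet> (R *\<^sub>v mid n X) = Qf" .
    have "phi0 S X X = of_int a * of_int d - Qf / 2"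
      unfolding phi0_split[OF Sc Xc Xc] X0 Xn m[unfolded R_def] by simp
    also have "\<dots> = - of_int D / of_nat q"
    proof -
      have "rat_of_int (Qi - D) = of_int (int q * d * a)" unfolding a ..
      hence "(1/2) * of_nat q * Qf - of_int D = of_nat q * of_int d * of_int a" unfolding Qi by simp
      thus ?thesis using qpos by (simp add: field_simps)
    qed
    finally show ?thesis .
  qed
  have vals: "phi0 S X (map_vec rat_of_int y) =
      of_int (a * y$(n+1) + d * y$0 - (\<Sum>i<n. s$i * y$(i+1))) / 2"
    if y: "y \<in> carrier_vec (n+2)" for y
  proof -
    let ?Y = "map_vec rat_of_int y"
    have Yc: "?Y \<in> carrier_vec (n+2)" using y by simp
    have mYc: "mid n ?Y \<in> carrier_vec n" unfolding mid_def by simp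
    have "mid n X \<bullet> (R *\<^sub>v mid n ?Y) = sr \<bullet> mid n ?Y" by (rule key[OF mYc])
    also have "\<dots> = of_int (\<Sum>i<n. s$i * y$(i+1))"
      unfolding sr_def mid_def scalar_prod_def using assms(6) y by (simp add: lessThan_atLeast0)
    finally have m: "mid n X \<bullet> (map_mat rat_of_int S *\<^sub>v mid n ?Y) = of_int (\<Sum>i<n. s$i * y$(i+1))"
      unfolding R_def .
    show ?thesis unfolding phi0_split[OF Sc Xc Yc] m X0 Xn using y by simp
  qed
  have H: "g = 1" if g: "g > 0" "g dvd d" "\<forall>i<n. g dvd s$i" for g
  proof -
    define s2 where "s2 = vec n (\<lambda>i. s$i div g)"
    have s2c: "s2 \<in> carrier_vec n" unfolding s2_def by simp
    define s2r where "s2r = map_vec rat_of_int s2"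
    have s2rc: "s2r \<in> carrier_vec n" unfolding s2r_def using s2c by simp
    have srg: "sr = of_int g \<cdot>\<^sub>v s2r"
    proof (rule eq_vecI)
      fix i assume "i < dim_vec (of_int g \<cdot>\<^sub>v s2r)"
      hence i: "i < n" unfolding s2r_def s2_def by simp
      have "s$i = g * (s$i div g)" using g(3) i by simp
      hence "rat_of_int (s$i) = rat_of_int (g * (s$i div g))" by (rule arg_cong)
      thus "sr $ i = (of_int g \<cdot>\<^sub>v s2r) $ i" unfolding sr_def s2r_def s2_def
        using i assms(6) by simp
    qed (unfold sr_def s2r_def s2_def, use assms(6) in simp)
    have "Qf = of_int g * of_int g * qf T s2r"
      unfolding Qf_def qf_def srg mult_mat_vec[OF Tc s2rc]
      using Tc s2rc by simp
    moreover have "(1/2) * of_nat q * qf T s2r \<in> \<int>" unfolding q_def T_def s2r_def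
      by (rule level_props(2)[OF assms(2) s2c])
    then obtain Q2 where Q2: "(1/2) * of_nat q * qf T s2r = of_int Q2" by (elim Ints_cases) auto
    ultimately have "rat_of_int Qi = of_int (g * g * Q2)" unfolding Qi[symmetric]
      by (simp add: algebra_simps Q2[symmetric])
    hence "Qi = g * g * Q2" by (simp only: of_int_eq_iff)
    hence "g dvd Qi" by simp
    moreover have "g dvd int q * d * a" using g by simp
    ultimately have "g dvd Qi - (Qi - D)" unfolding a by (rule dvd_diff)
    hence "g dvd D" by simp
    hence "\<bar>g\<bar> = 1" using coprime_common_divisor_int[OF assms(5) g(2)] by simp
    thus ?thesis using g by simp
  qed
  obtain y0 w where yw: "d*y0 - (\<Sum>i<n. s$i * w i) = 1"
    using bezout_aux[of d n "\<lambda>i. s$i", OF assms(4) H] by blast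
  have set: "{phi0 S X (map_vec rat_of_int y) | y :: int vec. y \<in> carrier_vec (n + 2)} = half_Z"
  proof
    show "{phi0 S X (map_vec rat_of_int y) | y :: int vec. y \<in> carrier_vec (n + 2)} \<subseteq> half_Z"
    proof
      fix x assume "x \<in> {phi0 S X (map_vec rat_of_int y) | y :: int vec. y \<in> carrier_vec (n + 2)}"
      then obtain y :: "int vec" where y: "y \<in> carrier_vec (n+2)" and x: "x = phi0 S X (map_vec rat_of_int y)" by blast
      show "x \<in> half_Z" unfolding half_Z_def x vals[OF y] by blast
    qed
  next
    show "half_Z \<subseteq> {phi0 S X (map_vec rat_of_int y) | y :: int vec. y \<in> carrier_vec (n + 2)}"
    proof
      fix x assume "x \<in> half_Z"
      then obtain kk where x: "x = of_int kk / 2" unfolding half_Z_def by auto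
      define y where "y = vec (n+2) (\<lambda>i. if i = 0 then kk*y0 else if i = n+1 then 0 else kk * w (i-1))"
      have yc: "y \<in> carrier_vec (n+2)" unfolding y_def by simp
      have "(\<Sum>i<n. s$i * y$(i+1)) = kk * (\<Sum>i<n. s$i * w i)"
        unfolding y_def by (simp add: sum_distrib_left algebra_simps)
      hence "a * y$(n+1) + d * y$0 - (\<Sum>i<n. s$i * y$(i+1)) = kk * (d*y0 - (\<Sum>i<n. s$i * w i))"
        unfolding y_def by (simp add: algebra_simps)
      hence "phi0 S X (map_vec rat_of_int y) = x" unfolding vals[OF yc] x yw by simp
      thus "x \<in> {phi0 S X (map_vec rat_of_int y) | y :: int vec. y \<in> carrier_vec (n + 2)}"
        using yc by blast
    qed
  qed
  have "X \<in> L0 S (- of_int D / of_nat q) half_Z"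
    unfolding L0_def dr using Xc self set by blast
  thus ?thesis unfolding X_def q_def Qf_def T_def sr_def .
qed

end
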